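(* Let $1\le p<\infty$ and let $\mathbf u,\mathbf v$ be bounded sequences of non-zero scalars such that the weighted backward shifts $B_{\mathbf u}$ and $B_{\mathbf v}$ are frequently hypercyclic on $\ell_p(\mathbb Z_+)$. If $\frac{u_1\cdots u_n}{v_1\cdots v_n}$ has a non-zero limit as $n\to\infty$, then $B_{\mathbf u}$ and $B_{\mathbf v}$ have the same frequently hypercyclic vectors.
   Context: $B_{\mathbf w}e_0=0$, $B_{\mathbf w}e_n=w_ne_{n-1}$ on $\ell_p(\mathbb Z_+)$ (real or complex). A vector $x$ is frequently hypercyclic for an operator $T$ if for every non-empty open set $U$, the set $\{n\in\mathbb Z_+: T^nx\in U\}$ has positive lower density; $T$ is frequently hypercyclic if it has such a vector. *)

theory Defs
  imports "HOL-Analysis.Analysis" "HOL-Library.Liminf_Limsup"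
begin

definition lp :: "real \<Rightarrow> (nat \<Rightarrow> 'a::real_normed_vector) set" where
  "lp p = {x. summable (\<lambda>n. norm (x n) powr p)}"

definition lp_norm :: "real \<Rightarrow> (nat \<Rightarrow> 'a::real_normed_vector) \<Rightarrow> real" where
  "lp_norm p x = (\<Sum>n. norm (x n) powr p) powr (1 / p)"

definition lp_open :: "real \<Rightarrow> (nat \<Rightarrow> 'a::real_normed_vector) set \<Rightarrow> bool" where
  "lp_open p U \<longleftrightarrow> U \<subseteq> lp p \<and>
     (\<forall>x\<in>U. \<exists>e>0. \<forall>y\<in>lp p. lp_norm p (y - x) < e \<longrightarrow> y \<in> U)"

text \<open>Weighted backward shift: (B_w x)_n = w_(n+1) x_(n+1), i.e. B_w e_0 = 0, B_w e_n = w_n e_(n-1).\<close>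
definition wshift :: "(nat \<Rightarrow> 'a::real_normed_field) \<Rightarrow> (nat \<Rightarrow> 'a) \<Rightarrow> (nat \<Rightarrow> 'a)" where
  "wshift w x = (\<lambda>n. w (Suc n) * x (Suc n))"

definition lower_density :: "nat set \<Rightarrow> ereal" where
  "lower_density A = liminf (\<lambda>N. ereal (real (card {n\<in>A. n < N}) / real N))"

definition fhc_vector :: "real \<Rightarrow> ((nat \<Rightarrow> 'a::real_normed_vector) \<Rightarrow> (nat \<Rightarrow> 'a)) \<Rightarrow> (nat \<Rightarrow> 'a) \<Rightarrow> bool" where
  "fhc_vector p T x \<longleftrightarrow> x \<in> lp p \<and>
     (\<forall>U. lp_open p U \<and> U \<noteq> {} \<longrightarrow> lower_density {n. (T ^^ n) x \<in> U} > 0)"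

definition fhc :: "real \<Rightarrow> ((nat \<Rightarrow> 'a::real_normed_vector) \<Rightarrow> (nat \<Rightarrow> 'a)) \<Rightarrow> bool" where
  "fhc p T \<longleftrightarrow> (\<exists>x. fhc_vector p T x)"

end

theory Submission
  imports Defs
begin


definition lpS :: "real \<Rightarrow> (nat \<Rightarrow> 'a::real_normed_vector) \<Rightarrow> real" where
  "lpS p w = (\<Sum>n. norm (w n) powr p)"

lemma powr_sum_le:
  fixes s t p :: real
  assumes "s \<ge> 0" "t \<ge> 0" "p > 0"
  shows "(s + t) powr p \<le> 2 powr p * (s powr p + t powr p)"
proof -
  have "s + t \<le> 2 * max s t" by auto
  hence "(s + t) powr p \<le> (2 * max s t) powr p"
    by (intro powr_mono2) (use assms in auto)
  also have "\<dots> = 2 powr p * (max s t) powr p" using assms by (simp add: powr_mult)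
  also have "(max s t) powr p \<le> s powr p + t powr p" by (cases "s \<le> t") (auto simp: max_def)
  hence "2 powr p * (max s t) powr p \<le> 2 powr p * (s powr p + t powr p)"
    by (intro mult_left_mono) auto
  finally show ?thesis .
qed

lemma lp_mult_bound:
  assumes p: "p > 0" and z: "z \<in> lp p" and C: "C \<ge> 0"
    and h: "\<And>k. norm (h k) \<le> C * norm (z k)"
  shows "h \<in> lp p \<and> lpS p h \<le> C powr p * lpS p z"
proof -
  have b: "norm (h k) powr p \<le> C powr p * norm (z k) powr p" for k
  proof -
    have "norm (h k) powr p \<le> (C * norm (z k)) powr p"
      by (intro powr_mono2) (use p h in auto)
    also have "\<dots> = C powr p * norm (z k) powr p" using C by (simp add: powr_mult)
    finally show ?thesis .
  qed
  have sz: "summable (\<lambda>k. norm (z k) powr p)" using z unfolding lp_def by auto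
  have s2: "summable (\<lambda>k. C powr p * norm (z k) powr p)" using summable_mult[OF sz] by simp
  have sh: "summable (\<lambda>k. norm (h k) powr p)"
    by (rule summable_comparison_test'[OF s2]) (use b in auto)
  have "lpS p h \<le> (\<Sum>k. C powr p * norm (z k) powr p)"
    unfolding lpS_def by (rule suminf_le[OF b sh s2])
  also have "\<dots> = C powr p * lpS p z" unfolding lpS_def by (rule suminf_mult[OF sz])
  finally show ?thesis using sh unfolding lp_def by auto
qed

lemma lp_tri:
  assumes p: "p > 0" and f: "f \<in> lp p" and g: "g \<in> lp p"
    and h: "\<And>k. norm (h k) \<le> norm (f k) + norm (g k)"
  shows "h \<in> lp p \<and> lpS p h \<le> 2 powr p * (lpS p f + lpS p g)"
proof -
  have b: "norm (h k) powr p \<le> 2 powr p * (norm (f k) powr p + norm (g k) powr p)" for k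
  proof -
    have "norm (h k) powr p \<le> (norm (f k) + norm (g k)) powr p"
      by (intro powr_mono2) (use p h in auto)
    also have "\<dots> \<le> 2 powr p * (norm (f k) powr p + norm (g k) powr p)"
      by (rule powr_sum_le) (use p in auto)
    finally show ?thesis .
  qed
  have sf: "summable (\<lambda>k. norm (f k) powr p)" using f unfolding lp_def by auto
  have sg: "summable (\<lambda>k. norm (g k) powr p)" using g unfolding lp_def by auto
  have sfg: "summable (\<lambda>k. norm (f k) powr p + norm (g k) powr p)" by (rule summable_add[OF sf sg])
  have s2: "summable (\<lambda>k. 2 powr p * (norm (f k) powr p + norm (g k) powr p))"
    by (rule summable_mult[OF sfg])
  have sh: "summable (\<lambda>k. norm (h k) powr p)"
    by (rule summable_comparison_test'[OF s2]) (use b in auto)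
  have "lpS p h \<le> (\<Sum>k. 2 powr p * (norm (f k) powr p + norm (g k) powr p))"
    unfolding lpS_def by (rule suminf_le[OF b sh s2])
  also have "\<dots> = 2 powr p * (lpS p f + lpS p g)" unfolding lpS_def
    using suminf_mult[OF sfg] suminf_add[OF sf sg] by simp
  finally show ?thesis using sh unfolding lp_def by auto
qed

lemma lp_minus:
  assumes "p > 0" "f \<in> lp p" "g \<in> lp p"
  shows "f - g \<in> lp p"
  using lp_tri[OF assms, of "f - g"] by (simp add: norm_triangle_ineq4)

lemma lpS_nonneg: "w \<in> lp p \<Longrightarrow> lpS p w \<ge> 0"
  unfolding lpS_def lp_def by (auto intro: suminf_nonneg)

lemma lp_norm_less:
  assumes p: "p > 0" and w: "w \<in> lp p" and e: "e > 0"
  shows "lp_norm p w < e \<longleftrightarrow> lpS p w < e powr p"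
proof -
  have S: "lpS p w \<ge> 0" using lpS_nonneg[OF w] .
  have n: "lp_norm p w = lpS p w powr (1/p)" unfolding lp_norm_def lpS_def by simp
  show ?thesis
  proof (cases "lpS p w = 0")
    case True thus ?thesis using n e by simp
  next
    case False
    hence Sp: "lpS p w > 0" using S by auto
    have "lpS p w powr (1/p) < e \<longleftrightarrow> (lpS p w powr (1/p)) powr p < e powr p"
    proof
      assume "lpS p w powr (1/p) < e"
      thus "(lpS p w powr (1/p)) powr p < e powr p" using p by (intro powr_less_mono2) auto
    next
      assume a: "(lpS p w powr (1/p)) powr p < e powr p"
      show "lpS p w powr (1/p) < e"
      proof (rule ccontr)
        assume "\<not> lpS p w powr (1/p) < e"
        hence "e powr p \<le> (lpS p w powr (1/p)) powr p" using p e by (intro powr_mono2) auto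
        thus False using a by simp
      qed
    qed
    also have "(lpS p w powr (1/p)) powr p = lpS p w" using p Sp by (simp add: powr_powr)
    finally show ?thesis using n by simp
  qed
qed

lemma lp_openI:
  assumes p: "p > 0" and V: "V \<subseteq> lp p"
    and h: "\<And>z. z \<in> V \<Longrightarrow> \<exists>\<delta>>0. \<forall>w\<in>lp p. lpS p (w - z) < \<delta> \<longrightarrow> w \<in> V"
  shows "lp_open p V"
  unfolding lp_open_def
proof (intro conjI V ballI)
  fix z assume z: "z \<in> V"
  obtain d where d: "d > 0" "\<forall>w\<in>lp p. lpS p (w - z) < d \<longrightarrow> w \<in> V" using h[OF z] by blast
  have zl: "z \<in> lp p" using z V by auto
  have dd: "(d powr (1/p)) powr p = d" using p d by (simp add: powr_powr)
  show "\<exists>e>0. \<forall>y\<in>lp p. lp_norm p (y - z) < e \<longrightarrow> y \<in> V"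
  proof (intro exI[of _ "d powr (1/p)"] conjI ballI impI)
    show "d powr (1/p) > 0" using d by simp
    fix y assume y: "y \<in> lp p" and "lp_norm p (y - z) < d powr (1/p)"
    hence "lpS p (y - z) < d"
      using lp_norm_less[OF p lp_minus[OF p y zl], of "d powr (1/p)"] d dd by simp
    thus "y \<in> V" using d y by auto
  qed
qed

lemma density_lemma:
  assumes A: "lower_density A > 0" and AB: "\<And>n. n \<in> A \<Longrightarrow> n \<ge> N \<Longrightarrow> n \<in> B"
  shows "lower_density B > 0"
proof -
  obtain r where r: "0 < ereal r" "ereal r < lower_density A" using ereal_dense2[OF A] by blast
  have r0: "r > 0" using r by simp
  have ev: "eventually (\<lambda>M. ereal r < ereal (real (card {n\<in>A. n < M}) / real M)) sequentially"
    using less_LiminfD[OF r(2)[unfolded lower_density_def]] .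
  have ev2: "eventually (\<lambda>M. real M \<ge> 2 * N / r + 1) sequentially"
  proof -
    have "eventually (\<lambda>M. M \<ge> nat \<lceil>2 * N / r + 1\<rceil>) sequentially" by (rule eventually_ge_at_top)
    thus ?thesis by eventually_elim linarith
  qed
  have "eventually (\<lambda>M. ereal (r/2) \<le> ereal (real (card {n\<in>B. n < M}) / real M)) sequentially"
    using ev ev2
  proof eventually_elim
    case (elim M)
    have "2 * real N / r \<ge> 0" using r0 by simp
    hence M: "real M > 0" using elim(2) by linarith
    have sub: "{n\<in>A. n < M} \<subseteq> {n\<in>B. n < M} \<union> {..<N}" using AB by force
    have "card {n\<in>A. n < M} \<le> card ({n\<in>B. n < M} \<union> {..<N})"
      by (rule card_mono[OF _ sub]) auto
    also have "\<dots> \<le> card {n\<in>B. n < M} + N" using card_Un_le[of "{n\<in>B. n < M}" "{..<N}"] by simp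
    finally have c: "real (card {n\<in>A. n < M}) \<le> real (card {n\<in>B. n < M}) + real N" by linarith
    have "r < real (card {n\<in>A. n < M}) / real M" using elim(1) by simp
    hence "r * M < real (card {n\<in>A. n < M})" using M by (simp add: field_simps)
    moreover have "r * M \<ge> 2 * N + r"
    proof -
      have "r * (2 * N / r + 1) \<le> r * M" using elim(2) r0 by (intro mult_left_mono) auto
      moreover have "r * (2 * N / r + 1) = 2 * N + r" using r0 by (simp add: field_simps)
      ultimately show ?thesis by simp
    qed
    ultimately have "r * M / 2 \<le> real (card {n\<in>B. n < M})" using c r0 by linarith
    thus ?case using M by (simp add: field_simps)
  qed
  hence "ereal (r/2) \<le> lower_density B" unfolding lower_density_def
    by (rule Liminf_bounded)
  moreover have "0 < ereal (r/2)" using r0 by simp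
  ultimately show ?thesis by (rule order_less_le_trans[rotated])
qed



lemma main_dir:
  fixes T1 T2 :: "(nat \<Rightarrow> 'a::{real_normed_field,banach}) \<Rightarrow> (nat \<Rightarrow> 'a)" and a :: "nat \<Rightarrow> 'a"
  assumes p: "p > 0" and anz: "\<forall>k. a k \<noteq> 0" and lim: "a \<longlonglongrightarrow> L" and L: "L \<noteq> 0"
    and rel: "\<forall>n x k. (T2 ^^ n) x k = a k / a (k+n) * (T1 ^^ n) x k"
    and fx: "fhc_vector p T1 x"
  shows "fhc_vector p T2 x"
proof -
  have xlp: "x \<in> lp p" and dens: "\<forall>U. lp_open p U \<and> U \<noteq> {} \<longrightarrow> lower_density {n. (T1^^n) x \<in> U} > 0"
    using fx unfolding fhc_vector_def by auto
  obtain A where A: "A > 0" "\<forall>k. norm (a k) \<le> A" using convergent_imp_Bseq[OF convergentI[OF lim]] BseqE by metis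
  have limi: "(\<lambda>k. inverse (a k)) \<longlonglongrightarrow> inverse L" using tendsto_inverse[OF lim L] .
  obtain B where B: "B > 0" "\<forall>k. norm (inverse (a k)) \<le> B" using convergent_imp_Bseq[OF convergentI[OF limi]] BseqE by metis
  have nL: "norm L > 0" using L by simp
  have "lower_density {n. (T2^^n) x \<in> U} > 0" if U: "lp_open p U" "U \<noteq> {}" for U
  proof -
    obtain y0 where y0: "y0 \<in> U" using U by auto
    have y0lp: "y0 \<in> lp p" using U y0 unfolding lp_open_def by auto
    obtain e where e: "e > 0" "\<forall>y\<in>lp p. lp_norm p (y - y0) < e \<longrightarrow> y \<in> U"
      using U y0 unfolding lp_open_def by blast
    define \<rho> where "\<rho> = e powr p"
    have \<rho>: "\<rho> > 0" using e by (simp add: \<rho>_def)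
    have U\<rho>: "y \<in> U" if "y \<in> lp p" "lpS p (y - y0) < \<rho>" for y
      using e(2) that lp_norm_less[OF p lp_minus[OF p that(1) y0lp] e(1)] \<rho>_def by auto
    define z0 where "z0 = (\<lambda>k. L / a k * y0 k)"
    have z0: "z0 \<in> lp p"
    proof -
      have "norm (z0 k) \<le> (norm L * B) * norm (y0 k)" for k
      proof -
        have "norm (z0 k) = norm L * norm (inverse (a k)) * norm (y0 k)"
          unfolding z0_def by (simp add: norm_mult norm_divide divide_inverse)
        also have "\<dots> \<le> norm L * B * norm (y0 k)"
          using B by (intro mult_right_mono mult_left_mono) auto
        finally show ?thesis .
      qed
      thus ?thesis using lp_mult_bound[OF p y0lp, of "norm L * B" z0] B by auto
    qed
    define \<tau> where "\<tau> = \<rho> / (2 * 2 powr p)"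
    have \<tau>: "\<tau> > 0" using \<rho> by (simp add: \<tau>_def)
    define R where "R = 2 powr p * (1 + lpS p z0)"
    have R: "R > 0" using lpS_nonneg[OF z0] by (simp add: R_def add_pos_nonneg)
    define Cd where "Cd = A / norm L"
    have Cd: "Cd > 0" using A nL by (simp add: Cd_def)
    have Dn: "norm (a k / L * w) \<le> Cd * norm w" for k w
      using A nL by (simp add: Cd_def norm_mult norm_divide divide_right_mono mult_right_mono)
    define W where "W = {w \<in> lp p. lpS p (\<lambda>k. a k / L * w k - y0 k) < \<tau> \<and> lpS p w < R}"
    define V where "V = {z \<in> lp p. \<exists>\<delta>>0. \<forall>w\<in>lp p. lpS p (w - z) < \<delta> \<longrightarrow> w \<in> W}"
    have VW: "V \<subseteq> W"
    proof
      fix z assume "z \<in> V"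
      then obtain d where "z \<in> lp p" "d > 0" "\<forall>w\<in>lp p. lpS p (w - z) < d \<longrightarrow> w \<in> W"
        unfolding V_def by blast
      moreover have "lpS p (z - z) = 0" by (simp add: lpS_def)
      ultimately show "z \<in> W" by auto
    qed
    have z0V: "z0 \<in> V"
    proof -
      define d where "d = min 1 (\<tau> / (Cd powr p + 1))"
      have cp: "Cd powr p + 1 > 0" using powr_ge_zero[of Cd p] by linarith
      have d: "d > 0" using \<tau> cp by (simp add: d_def)
      have "w \<in> W" if w: "w \<in> lp p" "lpS p (w - z0) < d" for w
      proof -
        have wz: "w - z0 \<in> lp p" using lp_minus[OF p w(1) z0] .
        have "lpS p (\<lambda>k. a k / L * w k - y0 k) \<le> Cd powr p * lpS p (w - z0)"
        proof (rule lp_mult_bound[OF p wz, THEN conjunct2])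
          show "Cd \<ge> 0" using Cd by simp
          fix k
          have "a k / L * w k - y0 k = a k / L * (w k - z0 k)"
            using anz L by (simp add: z0_def field_simps)
          thus "norm (a k / L * w k - y0 k) \<le> Cd * norm ((w - z0) k)" using Dn by simp
        qed
        also have "\<dots> \<le> Cd powr p * d" using w(2) by (intro mult_left_mono) auto
        also have "\<dots> < \<tau>"
        proof -
          have "Cd powr p * d \<le> Cd powr p * (\<tau> / (Cd powr p + 1))"
            by (intro mult_left_mono) (auto simp: d_def)
          also have "\<dots> < \<tau>" using \<tau> cp by (simp add: field_simps)
          finally show ?thesis .
        qed
        finally have 1: "lpS p (\<lambda>k. a k / L * w k - y0 k) < \<tau>" .
        have "lpS p w \<le> 2 powr p * (lpS p (w - z0) + lpS p z0)"
          by (rule lp_tri[OF p wz z0, THEN conjunct2]) (simp, metis add.commute norm_triangle_sub)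
        also have "\<dots> < R" unfolding R_def using w(2) d_def
          by (intro mult_strict_left_mono) auto
        finally show ?thesis using 1 w unfolding W_def by auto
      qed
      thus ?thesis using d z0 unfolding V_def by blast
    qed
    have Vopen: "lp_open p V"
    proof (rule lp_openI[OF p])
      show "V \<subseteq> lp p" unfolding V_def by auto
      fix z assume "z \<in> V"
      then obtain d where zd: "z \<in> lp p" "d > 0" "\<forall>w\<in>lp p. lpS p (w - z) < d \<longrightarrow> w \<in> W"
        unfolding V_def by blast
      define d' where "d' = d / (2 * 2 powr p)"
      have d': "d' > 0" using zd by (simp add: d'_def)
      show "\<exists>\<delta>>0. \<forall>w\<in>lp p. lpS p (w - z) < \<delta> \<longrightarrow> w \<in> V"
      proof (intro exI[of _ d'] conjI ballI impI d')
        fix w assume w: "w \<in> lp p" "lpS p (w - z) < d'"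
        have "w' \<in> W" if w': "w' \<in> lp p" "lpS p (w' - w) < d'" for w'
        proof -
          have "lpS p (w' - z) \<le> 2 powr p * (lpS p (w' - w) + lpS p (w - z))"
            by (rule lp_tri[OF p lp_minus[OF p w'(1) w(1)] lp_minus[OF p w(1) zd(1)], THEN conjunct2])
              (simp add: norm_triangle_sub[of "w' _ - z _" "w _ - z _", simplified] norm_triangle_ineq4
                 order_trans[OF _ norm_triangle_ineq] )
          also have "\<dots> < 2 powr p * (d' + d')" using w w' by (intro mult_strict_left_mono) auto
          also have "\<dots> = d" by (simp add: d'_def field_simps)
          finally show ?thesis using zd w' by auto
        qed
        thus "w \<in> V" using w d' unfolding V_def by blast
      qed
    qed
    have dV: "lower_density {n. (T1^^n) x \<in> V} > 0" using dens z0V Vopen by auto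
    define \<gamma> where "\<gamma> = (\<tau> / R) powr (1/p) / A"
    have \<gamma>: "\<gamma> > 0" using \<tau> R A by (simp add: \<gamma>_def)
    have A\<gamma>: "(A * \<gamma>) powr p = \<tau> / R" using A \<tau> R p by (simp add: \<gamma>_def powr_powr)
    obtain N where N: "\<forall>m\<ge>N. dist (inverse (a m)) (inverse L) < \<gamma>"
      using limi[unfolded LIMSEQ_def] \<gamma> by blast
    have inU: "(T2^^n) x \<in> U" if n: "n \<in> {n. (T1^^n) x \<in> V}" "n \<ge> N" for n
    proof -
      define w where "w = (T1^^n) x"
      have wW: "w \<in> W" using n VW unfolding w_def by auto
      hence wl: "w \<in> lp p" and w1: "lpS p (\<lambda>k. a k / L * w k - y0 k) < \<tau>" and w2: "lpS p w < R"
        unfolding W_def by auto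
      have T2: "(T2^^n) x k = a k / a (k+n) * w k" for k using rel w_def by simp
      have T2l: "(T2^^n) x \<in> lp p"
      proof (rule lp_mult_bound[OF p wl, THEN conjunct1])
        show "A * B \<ge> 0" using A B by simp
        fix k
        have "norm ((T2^^n) x k) = norm (a k) * norm (inverse (a (k+n))) * norm (w k)"
          by (simp add: T2 norm_mult norm_divide divide_inverse)
        also have "\<dots> \<le> A * B * norm (w k)"
          using A B by (intro mult_right_mono mult_mono) auto
        finally show "norm ((T2^^n) x k) \<le> A * B * norm (w k)" .
      qed
      have Dl: "(\<lambda>k. a k / L * w k - y0 k) \<in> lp p"
      proof -
        have "(\<lambda>k. a k / L * w k) \<in> lp p"
          using lp_mult_bound[OF p wl, of Cd "\<lambda>k. a k / L * w k"] Cd Dn by auto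
        from lp_minus[OF p this y0lp] show ?thesis by (simp add: fun_diff_def)
      qed
      define E where "E = (\<lambda>k. a k * (inverse (a (k+n)) - inverse L) * w k)"
      have El: "E \<in> lp p \<and> lpS p E \<le> (A * \<gamma>) powr p * lpS p w"
      proof (rule lp_mult_bound[OF p wl])
        show "A * \<gamma> \<ge> 0" using A \<gamma> by simp
        fix k
        have "norm (inverse (a (k+n)) - inverse L) < \<gamma>" using N n(2) by (simp add: dist_norm)
        hence "norm (a k) * norm (inverse (a (k+n)) - inverse L) \<le> A * \<gamma>"
          using A by (intro mult_mono) auto
        thus "norm (E k) \<le> A * \<gamma> * norm (w k)"
          unfolding E_def by (simp add: norm_mult mult_right_mono)
      qed
      have "lpS p E \<le> \<tau> / R * lpS p w" using El A\<gamma> by simp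
      also have "\<dots> \<le> \<tau>" using w2 \<tau> R lpS_nonneg[OF wl] by (simp add: field_simps)
      finally have Es: "lpS p E \<le> \<tau>" .
      have eq: "(T2^^n) x k - y0 k = (a k / L * w k - y0 k) + E k" for k
        using anz L unfolding T2 E_def by (simp add: field_simps)
      have "lpS p ((T2^^n) x - y0) \<le> 2 powr p * (lpS p (\<lambda>k. a k / L * w k - y0 k) + lpS p E)"
        by (rule lp_tri[OF p Dl El[THEN conjunct1], THEN conjunct2]) (simp add: eq norm_triangle_ineq)
      also have "\<dots> < 2 powr p * (\<tau> + \<tau>)" using w1 Es by (intro mult_strict_left_mono) auto
      also have "\<dots> = \<rho>" by (simp add: \<tau>_def field_simps)
      finally show ?thesis using U\<rho> T2l by auto
    qed
    show ?thesis by (rule density_lemma[OF dV]) (use inU in auto)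
  qed
  thus ?thesis using xlp unfolding fhc_vector_def by auto
qed



lemma wshift_pow:
  "(wshift w ^^ n) x k * (\<Prod>i\<in>{1..k}. w i) = (\<Prod>i\<in>{1..k+n}. w i) * x (k+n)"
proof (induction n arbitrary: x)
  case 0 thus ?case by (simp add: mult.commute)
next
  case (Suc n)
  have "(wshift w ^^ Suc n) x k * (\<Prod>i\<in>{1..k}. w i) = (wshift w ^^ n) (wshift w x) k * (\<Prod>i\<in>{1..k}. w i)"
    by (simp add: funpow_Suc_right del: funpow.simps)
  also have "\<dots> = (\<Prod>i\<in>{1..k+n}. w i) * (w (Suc (k+n)) * x (Suc (k+n)))"
    unfolding Suc.IH[of "wshift w x"] by (simp add: wshift_def)
  also have "\<dots> = (\<Prod>i\<in>{1..k + Suc n}. w i) * x (k + Suc n)"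
    by (simp add: atLeastAtMostSuc_conv mult.assoc)
  finally show ?case .
qed

lemma prod_nz: "\<forall>n\<ge>1. w n \<noteq> (0::'a::field) \<Longrightarrow> (\<Prod>i\<in>{1..(k::nat)}. w i) \<noteq> 0"
  by (subst prod_zero_iff) auto

lemma wshift_rel:
  fixes u v :: "nat \<Rightarrow> 'a::real_normed_field"
  assumes "\<forall>n\<ge>1. u n \<noteq> 0" "\<forall>n\<ge>1. v n \<noteq> 0"
  shows "(wshift v ^^ n) x k =
     ((\<Prod>i\<in>{1..k}. u i) / (\<Prod>i\<in>{1..k}. v i)) /
     ((\<Prod>i\<in>{1..k+n}. u i) / (\<Prod>i\<in>{1..k+n}. v i)) * (wshift u ^^ n) x k"
proof -
  have u1: "(\<Prod>i\<in>{1..m}. u i) \<noteq> 0" for m using prod_nz[OF assms(1)] .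
  have v1: "(\<Prod>i\<in>{1..m}. v i) \<noteq> 0" for m using prod_nz[OF assms(2)] .
  have U: "(wshift u ^^ n) x k = (\<Prod>i\<in>{1..k+n}. u i) * x (k+n) / (\<Prod>i\<in>{1..k}. u i)"
    by (metis nonzero_mult_div_cancel_right u1 wshift_pow)
  have V: "(wshift v ^^ n) x k = (\<Prod>i\<in>{1..k+n}. v i) * x (k+n) / (\<Prod>i\<in>{1..k}. v i)"
    by (metis nonzero_mult_div_cancel_right v1 wshift_pow)
  show ?thesis
    unfolding U V using u1[of k] v1[of k] u1[of "k+n"] v1[of "k+n"] by (simp add: field_simps del: prod_zero_iff)
qed

theorem proposition6p9:
  fixes p :: real and u v :: "nat \<Rightarrow> 'a::{real_normed_field, banach}" and L :: 'a
  assumes "1 \<le> p"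
    and "bounded (range u)" and "bounded (range v)"
    and "\<forall>n\<ge>1. u n \<noteq> 0" and "\<forall>n\<ge>1. v n \<noteq> 0"
    and "fhc p (wshift u)" and "fhc p (wshift v)"
    and "(\<lambda>n. (\<Prod>i\<in>{1..n}. u i) / (\<Prod>i\<in>{1..n}. v i)) \<longlonglongrightarrow> L"
    and "L \<noteq> 0"
  shows "{x. fhc_vector p (wshift u) x} = {x. fhc_vector p (wshift v) x}"
proof -
  have p: "p > 0" using assms(1) by simp
  have u1: "(\<Prod>i\<in>{1..m}. u i) \<noteq> 0" for m using prod_nz[OF assms(4)] .
  have v1: "(\<Prod>i\<in>{1..m}. v i) \<noteq> 0" for m using prod_nz[OF assms(5)] .
  have lim2: "(\<lambda>n. (\<Prod>i\<in>{1..n}. v i) / (\<Prod>i\<in>{1..n}. u i)) \<longlonglongrightarrow> inverse L"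
    using tendsto_inverse[OF assms(8) assms(9)] by (simp add: inverse_divide)
  show ?thesis
  proof (intro set_eqI iffI; simp)
    fix x assume fx: "fhc_vector p (wshift u) x"
    show "fhc_vector p (wshift v) x"
      by (rule main_dir[OF p _ assms(8) assms(9) _ fx]) (metis divide_eq_0_iff u1 v1, use wshift_rel[OF assms(4,5)] in simp)
  next
    fix x assume fx: "fhc_vector p (wshift v) x"
    show "fhc_vector p (wshift u) x"
      by (rule main_dir[OF p _ lim2 _ _ fx]) (metis divide_eq_0_iff u1 v1, simp add: assms(9), use wshift_rel[OF assms(5,4)] in simp)
  qed
qed

end
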